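(* Let $\mathscr P\subseteq\mathbb N^p$ be a polymatroid and fix any lexicographic order $\prec$ on $\mathbb N^p$ (used to define $\mathrm{Stal}_{\mathscr P}$). Then \[\mathrm{Cave}_{\mathscr P}(\mathbf t)=\mathrm{Stal}_{\mathscr P}(\mathbf t)=\mathrm{Box}_{\mathscr P}(\mathbf t)=\text{M\"ob}_{\mathscr P}(\mathbf t).\]
   Context: Notation: $[p]=\{1,\dots,p\}$; $\mathbf e_i$ is the $i$th standard basis vector of $\mathbb Z^p$; for $J\subseteq[p]$, $\mathbf e_J=\sum_{j\in J}\mathbf e_j$ ($\mathbf e_\varnothing=\mathbf 0$); $|\mathbf n|=n_1+\dots+n_p$; $\mathbf a\le\mathbf b$ means $a_i\le b_i$ for all $i$ (componentwise order), and $\mathbf a<\mathbf b$ means $\mathbf a\le\mathbf b$, $\mathbf a\neq\mathbf b$; $\mathbf t^{\mathbf n}=t_1^{n_1}\cdots t_p^{n_p}$. Polymatroid: a finite set $\mathscr P\subseteq\mathbb N^p$ that is homogeneous (all $\mathbf u\in\mathscr P$ have the same value of $|\mathbf u|$; this common value is the rank $\mathrm{rk}(\mathscr P)$) and M-convex: for all $\mathbf u,\mathbf v\in\mathscr P$ and $i\in[p]$ with $u_i>v_i$ there is $j\in[p]$ with $u_j<v_j$ and $\mathbf u-\mathbf e_i+\mathbf e_j\in\mathscr P$. $I(\mathscr P)$ denotes the set of lattice points of the independence polytope of $\mathscr P$, i.e. $I(\mathscr P)=\{\mathbf n\in\mathbb N^p:\mathbf n\le\mathbf u\text{ for some }\mathbf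 u\in\mathscr P\}$. The indicator function is $\mathbb 1_{\mathscr P}(\mathbf n)=1$ if $\mathbf n\in\mathscr P$ and $0$ otherwise, for $\mathbf n\in\mathbb Z^p$. Cave polynomial: $\displaystyle\mathrm{Cave}_{\mathscr P}(\mathbf t)=\sum_{\mathbf n\in\mathbb N^p,\ |\mathbf n|=\mathrm{rk}(\mathscr P)}\mathbb 1_{\mathscr P}(\mathbf n)\prod_{i=1}^{p-1}\Big(1-\max_{j>i}\{\mathbb 1_{\mathscr P}(\mathbf n-\mathbf e_i+\mathbf e_j)\}\,t_i^{-1}\Big)\mathbf t^{\mathbf n}.$ Lexicographic orders: given a total ordering $\sigma_1,\dots,\sigma_p$ of $[p]$, $\mathbf u\prec\mathbf v$ iff $\mathbf u\ne\mathbf v$ and at the first index (in the order $\sigma_1,\sigma_2,\dots$) where they differ, $\mathbf u$ has the smaller entry. The standard lex order is the one with $\sigma_k=k$. Stalactites: for $\mathbf u\in\mathscr P$ and $V\subseteq\mathscr P$ let $L(\mathbf u;V)=\{\ell\in[p]:\mathbf u-\mathbf e_\ell+\mathbf e_j\in V\text{ for some }j\in[p]\}$ and $\mathrm{St}(\mathbf u;V)=\{\mathbf u-\mathbf e_J: J\subseteq L(\mathbf u;V)\}$. List $\mathscr P=\{\mathbf a_1\prec\dots\prec\mathbf a_r\}$ in the chosen lex order; the stalactites of $\mathscr P$ are the sets $\mathrm{St}(\mathbf a_k;\{\mathbf a_1,\dots,\mathbf a_{k-1}\})$, $k=1,\dots,r$. Let $c_{\mathbf n}(\mathscr P)=\#\{k:\mathbf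 n\in\mathrm{St}(\mathbf a_k;\{\mathbf a_1,\dots,\mathbf a_{k-1}\})\}$. Stalactite polynomial: $\mathrm{Stal}_{\mathscr P}(\mathbf t)=\sum_{\mathbf n\in I(\mathscr P)}(-1)^{\mathrm{rk}(\mathscr P)-|\mathbf n|}c_{\mathbf n}(\mathscr P)\mathbf t^{\mathbf n}$. Box polynomial: $\mathrm{Box}_{\mathscr P}(\mathbf t)=\sum_{\mathbf n\in I(\mathscr P)}\prod_{i=1}^p f_{n_i}(t_i)$, where $f_0(t)=1$ and $f_k(t)=t^k-t^{k-1}$ for $k\ge1$. M\"obius polynomial: let $P$ be the poset on $I(\mathscr P)\sqcup\{\hat 1\}$ ordered componentwise on $I(\mathscr P)$, with $\hat 1$ a new maximum element. Its M\"obius function is $\mu_P(\mathbf m,\mathbf m)=1$, $\mu_P(\mathbf m,\mathbf n)=-\sum_{\mathbf m\le\mathbf a<\mathbf n}\mu_P(\mathbf m,\mathbf a)$ for $\mathbf m<\mathbf n$, and $\mu_P(\mathbf m,\mathbf n)=0$ if $\mathbf m\not\le\mathbf n$. Set $\mu_{\mathscr P}(\mathbf n)=-\mu_P(\mathbf n,\hat 1)$ for $\mathbf n\in I(\mathscr P)$, and $\text{M\"ob}_{\mathscr P}(\mathbf t)=\sum_{\mathbf n\in I(\mathscr P)}\mu_{\mathscr P}(\mathbf n)\mathbf t^{\mathbf n}$. *)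

theory Defs
  imports Main "HOL.Real"
begin

text \<open>Vectors in Z^p are functions nat => int, coordinates 0..p-1 (0-based), zero elsewhere.\<close>

definition Zp :: "nat \<Rightarrow> (nat \<Rightarrow> int) set" where
  "Zp p = {n. \<forall>i. p \<le> i \<longrightarrow> n i = 0}"

definition Np :: "nat \<Rightarrow> (nat \<Rightarrow> int) set" where
  "Np p = {n \<in> Zp p. \<forall>i<p. 0 \<le> n i}"

definition ebas :: "nat \<Rightarrow> nat \<Rightarrow> int" where
  "ebas i = (\<lambda>k. if k = i then 1 else 0)"

definition eset :: "nat set \<Rightarrow> nat \<Rightarrow> int" where
  "eset J = (\<lambda>k. if k \<in> J then 1 else 0)"

definition vsub :: "(nat \<Rightarrow> int) \<Rightarrow> (nat \<Rightarrow> int) \<Rightarrow> nat \<Rightarrow> int" where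
  "vsub u w = (\<lambda>k. u k - w k)"

definition vadd :: "(nat \<Rightarrow> int) \<Rightarrow> (nat \<Rightarrow> int) \<Rightarrow> nat \<Rightarrow> int" where
  "vadd u w = (\<lambda>k. u k + w k)"

definition vnorm :: "nat \<Rightarrow> (nat \<Rightarrow> int) \<Rightarrow> int" where
  "vnorm p n = (\<Sum>i<p. n i)"

definition polymatroid :: "nat \<Rightarrow> (nat \<Rightarrow> int) set \<Rightarrow> bool" where
  "polymatroid p P \<longleftrightarrow> finite P \<and> P \<subseteq> Np p
     \<and> (\<forall>u\<in>P. \<forall>v\<in>P. vnorm p u = vnorm p v)
     \<and> (\<forall>u\<in>P. \<forall>v\<in>P. \<forall>i<p. u i > v i \<longrightarrow>
           (\<exists>j<p. u j < v j \<and> vadd (vsub u (ebas i)) (ebas j) \<in> P))"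

definition rk :: "nat \<Rightarrow> (nat \<Rightarrow> int) set \<Rightarrow> int" where
  "rk p P = vnorm p (SOME u. u \<in> P)"

definition indep_pts :: "nat \<Rightarrow> (nat \<Rightarrow> int) set \<Rightarrow> (nat \<Rightarrow> int) set" where
  "indep_pts p P = {n \<in> Np p. \<exists>u\<in>P. n \<le> u}"

definition ind :: "(nat \<Rightarrow> int) set \<Rightarrow> (nat \<Rightarrow> int) \<Rightarrow> real" where
  "ind P n = (if n \<in> P then 1 else 0)"

definition tmon :: "nat \<Rightarrow> (nat \<Rightarrow> real) \<Rightarrow> (nat \<Rightarrow> int) \<Rightarrow> real" where
  "tmon p t n = (\<Prod>i<p. t i powi n i)"

definition Cave :: "nat \<Rightarrow> (nat \<Rightarrow> int) set \<Rightarrow> (nat \<Rightarrow> real) \<Rightarrow> real" where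
  "Cave p P t = (\<Sum>n\<in>{n \<in> Np p. vnorm p n = rk p P}.
      ind P n * (\<Prod>i<p - 1.
         (1 - (if \<exists>j. i < j \<and> j < p \<and> vadd (vsub n (ebas i)) (ebas j) \<in> P then 1 else 0) * inverse (t i)))
      * tmon p t n)"

text \<open>Lexicographic order given by a total ordering sigma 0,...,sigma (p-1) of the indices.\<close>
definition lex_less :: "nat \<Rightarrow> (nat \<Rightarrow> nat) \<Rightarrow> (nat \<Rightarrow> int) \<Rightarrow> (nat \<Rightarrow> int) \<Rightarrow> bool" where
  "lex_less p \<sigma> u v \<longleftrightarrow> u \<noteq> v \<and>
     (\<exists>k<p. (\<forall>l<k. u (\<sigma> l) = v (\<sigma> l)) \<and> u (\<sigma> k) < v (\<sigma> k))"

definition Lset :: "nat \<Rightarrow> (nat \<Rightarrow> int) \<Rightarrow> (nat \<Rightarrow> int) set \<Rightarrow> nat set" where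
  "Lset p u V = {l. l < p \<and> (\<exists>j<p. vadd (vsub u (ebas l)) (ebas j) \<in> V)}"

definition St :: "nat \<Rightarrow> (nat \<Rightarrow> int) \<Rightarrow> (nat \<Rightarrow> int) set \<Rightarrow> (nat \<Rightarrow> int) set" where
  "St p u V = {vsub u (eset J) | J. J \<subseteq> Lset p u V}"

text \<open>Number of stalactites St(a_k; {a_1,...,a_(k-1)}) containing n; note {a_1..a_(k-1)} = {v in P. v < a_k}.\<close>
definition cnt :: "nat \<Rightarrow> (nat \<Rightarrow> nat) \<Rightarrow> (nat \<Rightarrow> int) set \<Rightarrow> (nat \<Rightarrow> int) \<Rightarrow> nat" where
  "cnt p \<sigma> P n = card {u \<in> P. n \<in> St p u {v \<in> P. lex_less p \<sigma> v u}}"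

definition Stal :: "nat \<Rightarrow> (nat \<Rightarrow> nat) \<Rightarrow> (nat \<Rightarrow> int) set \<Rightarrow> (nat \<Rightarrow> real) \<Rightarrow> real" where
  "Stal p \<sigma> P t = (\<Sum>n\<in>indep_pts p P.
      (-1) ^ nat (rk p P - vnorm p n) * real (cnt p \<sigma> P n) * tmon p t n)"

definition fbox :: "nat \<Rightarrow> real \<Rightarrow> real" where
  "fbox k x = (if k = 0 then 1 else x ^ k - x ^ (k - 1))"

definition Box :: "nat \<Rightarrow> (nat \<Rightarrow> int) set \<Rightarrow> (nat \<Rightarrow> real) \<Rightarrow> real" where
  "Box p P t = (\<Sum>n\<in>indep_pts p P. \<Prod>i<p. fbox (nat (n i)) (t i))"

definition is_mobius :: "'a set \<Rightarrow> ('a \<Rightarrow> 'a \<Rightarrow> bool) \<Rightarrow> ('a \<Rightarrow> 'a \<Rightarrow> int) \<Rightarrow> bool" where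
  "is_mobius S le f \<longleftrightarrow>
     (\<forall>m n. (m \<notin> S \<or> n \<notin> S) \<longrightarrow> f m n = 0) \<and>
     (\<forall>m\<in>S. \<forall>n\<in>S. f m n =
        (if m = n then 1
         else if le m n then - (\<Sum>a\<in>{a\<in>S. le m a \<and> le a n \<and> a \<noteq> n}. f m a)
         else 0))"

definition mobius :: "'a set \<Rightarrow> ('a \<Rightarrow> 'a \<Rightarrow> bool) \<Rightarrow> 'a \<Rightarrow> 'a \<Rightarrow> int" where
  "mobius S le = (THE f. is_mobius S le f)"

text \<open>The poset I(P) with a new top element: None is the top element hat 1.\<close>
definition hatP :: "nat \<Rightarrow> (nat \<Rightarrow> int) set \<Rightarrow> (nat \<Rightarrow> int) option set" where
  "hatP p P = Some ` indep_pts p P \<union> {None}"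

definition hat_le :: "(nat \<Rightarrow> int) option \<Rightarrow> (nat \<Rightarrow> int) option \<Rightarrow> bool" where
  "hat_le x y = (case y of None \<Rightarrow> True
       | Some b \<Rightarrow> (case x of None \<Rightarrow> False | Some a \<Rightarrow> a \<le> b))"

definition muP :: "nat \<Rightarrow> (nat \<Rightarrow> int) set \<Rightarrow> (nat \<Rightarrow> int) \<Rightarrow> int" where
  "muP p P n = - mobius (hatP p P) hat_le (Some n) None"

definition Mob :: "nat \<Rightarrow> (nat \<Rightarrow> int) set \<Rightarrow> (nat \<Rightarrow> real) \<Rightarrow> real" where
  "Mob p P t = (\<Sum>n\<in>indep_pts p P. real_of_int (muP p P n) * tmon p t n)"

end

theory Submission
  imports Defs
begin


definition boxset :: "nat \<Rightarrow> (nat \<Rightarrow> int set) \<Rightarrow> (nat \<Rightarrow> int) set" where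
  "boxset p A = {n. (\<forall>i<p. n i \<in> A i) \<and> (\<forall>i. p \<le> i \<longrightarrow> n i = 0)}"

lemma boxset_0: "boxset 0 A = {\<lambda>_. 0}"
  unfolding boxset_def by auto

lemma boxset_Suc: "boxset (Suc p) A = (\<lambda>(m,k). m(p:=k)) ` (boxset p A \<times> A p)"
proof (intro equalityI subsetI)
  fix n assume n: "n \<in> boxset (Suc p) A"
  have "n = (\<lambda>(m,k). m(p:=k)) (n(p:=0), n p)" by auto
  moreover have "(n(p:=0), n p) \<in> boxset p A \<times> A p"
    using n unfolding boxset_def by (auto simp: le_Suc_eq)
  ultimately show "n \<in> (\<lambda>(m,k). m(p:=k)) ` (boxset p A \<times> A p)" by blast
next
  fix n assume "n \<in> (\<lambda>(m,k). m(p:=k)) ` (boxset p A \<times> A p)"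
  then obtain m k where "n = m(p:=k)" "m \<in> boxset p A" "k \<in> A p" by auto
  then show "n \<in> boxset (Suc p) A" unfolding boxset_def
    by (auto simp: less_Suc_eq)
qed

lemma boxset_inj: "inj_on (\<lambda>(m,k). m(p:=k)) (boxset p A \<times> A p)"
proof (rule inj_onI, clarify)
  fix m k m' k' assume a: "m \<in> boxset p A" "m' \<in> boxset p A" "m(p := k) = m'(p := k')"
  have "m p = 0" "m' p = 0" using a(1,2) unfolding boxset_def by auto
  have "k = k'" using fun_cong[OF a(3), of p] by simp
  moreover have "m = m'"
  proof
    fix i show "m i = m' i" using fun_cong[OF a(3), of i] \<open>m p = 0\<close> \<open>m' p = 0\<close>
      by (cases "i = p") auto
  qed
  ultimately show "m = m' \<and> k = k'" by simp
qed

lemma finite_boxset: "(\<And>i. i < p \<Longrightarrow> finite (A i)) \<Longrightarrow> finite (boxset p A)"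
proof (induction p)
  case 0 then show ?case by (simp add: boxset_0)
next
  case (Suc p) then show ?case by (simp add: boxset_Suc)
qed

lemma sum_prod_boxset:
  fixes g :: "nat \<Rightarrow> int \<Rightarrow> 'a::comm_semiring_1"
  shows "(\<Sum>n\<in>boxset p A. \<Prod>i<p. g i (n i)) = (\<Prod>i<p. \<Sum>k\<in>A i. g i k)"
proof (induction p)
  case 0 then show ?case by (simp add: boxset_0)
next
  case (Suc p)
  have "(\<Sum>n\<in>boxset (Suc p) A. \<Prod>i<Suc p. g i (n i))
      = (\<Sum>x\<in>boxset p A \<times> A p. \<Prod>i<Suc p. g i ((\<lambda>(m,k). m(p:=k)) x i))"
    unfolding boxset_Suc by (subst sum.reindex[OF boxset_inj]) (simp add: comp_def)
  also have "\<dots> = (\<Sum>(m,k)\<in>boxset p A \<times> A p. (\<Prod>i<p. g i (m i)) * g p k)"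
    by (rule sum.cong) (auto intro!: prod.cong)
  also have "\<dots> = (\<Sum>m\<in>boxset p A. \<Sum>k\<in>A p. (\<Prod>i<p. g i (m i)) * g p k)"
    by (rule sum.cartesian_product[symmetric])
  also have "\<dots> = (\<Sum>m\<in>boxset p A. \<Prod>i<p. g i (m i)) * (\<Sum>k\<in>A p. g p k)"
    by (simp add: sum_product)
  also have "\<dots> = (\<Prod>i<Suc p. \<Sum>k\<in>A i. g i k)" using Suc by simp
  finally show ?case .
qed



lemma Np_nonneg: "n \<in> Np p \<Longrightarrow> 0 \<le> n i"
  unfolding Np_def Zp_def by (cases "i < p") auto

lemma Np_zero: "n \<in> Np p \<Longrightarrow> p \<le> i \<Longrightarrow> n i = 0"
  unfolding Np_def Zp_def by auto

lemma mv_apply: "vadd (vsub u (ebas l)) (ebas j) k = u k - (if k = l then 1 else 0) + (if k = j then 1 else 0)"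
  unfolding vadd_def vsub_def ebas_def by simp

lemma lex_irrefl: "\<not> lex_less p \<sigma> u u"
  unfolding lex_less_def by simp

lemma lex_trans:
  assumes "lex_less p \<sigma> a b" "lex_less p \<sigma> b c"
  shows "lex_less p \<sigma> a c"
proof -
  obtain k1 where k1: "k1 < p" "\<forall>l<k1. a (\<sigma> l) = b (\<sigma> l)" "a (\<sigma> k1) < b (\<sigma> k1)"
    using assms(1) unfolding lex_less_def by auto
  obtain k2 where k2: "k2 < p" "\<forall>l<k2. b (\<sigma> l) = c (\<sigma> l)" "b (\<sigma> k2) < c (\<sigma> k2)"
    using assms(2) unfolding lex_less_def by auto
  define k where "k = min k1 k2"
  have "k < p" using k1 k2 by (simp add: k_def)
  moreover have "\<forall>l<k. a (\<sigma> l) = c (\<sigma> l)" using k1 k2 by (simp add: k_def)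
  moreover have "a (\<sigma> k) < c (\<sigma> k)"
    using k1 k2 by (cases "k1 < k2"; cases "k2 < k1") (auto simp: k_def min_def)
  ultimately show ?thesis unfolding lex_less_def by auto
qed

lemma lex_total:
  assumes bij: "bij_betw \<sigma> {..<p} {..<p}" and u: "u \<in> Zp p" and v: "v \<in> Zp p" and ne: "u \<noteq> v"
  shows "lex_less p \<sigma> u v \<or> lex_less p \<sigma> v u"
proof -
  obtain i where i: "u i \<noteq> v i" using ne by auto
  have "i < p" using i u v unfolding Zp_def by (metis (mono_tags, lifting) mem_Collect_eq not_le)
  then have "i \<in> \<sigma> ` {..<p}" using bij unfolding bij_betw_def by simp
  then obtain k0 where k0: "k0 < p" "\<sigma> k0 = i" by auto
  define k where "k = (LEAST k. k < p \<and> u (\<sigma> k) \<noteq> v (\<sigma> k))"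
  have kp: "k < p \<and> u (\<sigma> k) \<noteq> v (\<sigma> k)"
    unfolding k_def by (rule LeastI[of _ k0]) (use k0 i in auto)
  have eq: "\<forall>l<k. u (\<sigma> l) = v (\<sigma> l)"
  proof (intro allI impI)
    fix l assume "l < k"
    then show "u (\<sigma> l) = v (\<sigma> l)" using kp not_less_Least[of l "\<lambda>k. k < p \<and> u (\<sigma> k) \<noteq> v (\<sigma> k)"]
      unfolding k_def by auto
  qed
  show ?thesis
  proof (cases "u (\<sigma> k) < v (\<sigma> k)")
    case True then show ?thesis using kp eq ne unfolding lex_less_def by auto
  next
    case False then have "v (\<sigma> k) < u (\<sigma> k)" using kp by auto
    then show ?thesis using kp eq ne unfolding lex_less_def by (metis)
  qed
qed

lemma lex_min_exists:
  assumes "finite S" "S \<noteq> {}"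
  shows "\<exists>m\<in>S. \<forall>y\<in>S. \<not> lex_less p \<sigma> y m"
  using assms
proof (induction S rule: finite_ne_induct)
  case (singleton x) then show ?case by (simp add: lex_irrefl)
next
  case (insert x F)
  then obtain m where m: "m \<in> F" "\<forall>y\<in>F. \<not> lex_less p \<sigma> y m" by auto
  show ?case
  proof (cases "lex_less p \<sigma> x m")
    case True
    have "\<forall>y\<in>insert x F. \<not> lex_less p \<sigma> y x"
      using m True lex_trans lex_irrefl by blast
    then show ?thesis by blast
  next
    case False then show ?thesis using m by blast
  qed
qed

context
  fixes p :: nat and P :: "(nat \<Rightarrow> int) set"
  assumes pm: "polymatroid p P"
begin

lemma P_Np: "P \<subseteq> Np p" using pm unfolding polymatroid_def by auto
lemma P_fin: "finite P" using pm unfolding polymatroid_def by auto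

lemma rk_eq: "u \<in> P \<Longrightarrow> rk p P = vnorm p u"
  using pm unfolding polymatroid_def rk_def by (metis someI)

lemma exch: "u \<in> P \<Longrightarrow> v \<in> P \<Longrightarrow> i < p \<Longrightarrow> u i > v i \<Longrightarrow>
   \<exists>j<p. u j < v j \<and> vadd (vsub u (ebas i)) (ebas j) \<in> P"
  using pm unfolding polymatroid_def by blast

lemma I_sub: "indep_pts p P \<subseteq> (\<Union>u\<in>P. boxset p (\<lambda>i. {0..u i}))"
proof
  fix n assume "n \<in> indep_pts p P"
  then obtain u where u: "u \<in> P" "n \<in> Np p" "n \<le> u" unfolding indep_pts_def by auto
  have "n \<in> boxset p (\<lambda>i. {0..u i})"
    unfolding boxset_def using u Np_nonneg[of n p] Np_zero[of n p] by (auto simp: le_fun_def)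
  then show "n \<in> (\<Union>u\<in>P. boxset p (\<lambda>i. {0..u i}))" using u by auto
qed

lemma I_fin: "finite (indep_pts p P)"
  by (rule finite_subset[OF I_sub]) (auto intro!: finite_boxset simp: P_fin)

lemma P_I: "P \<subseteq> indep_pts p P"
  using P_Np unfolding indep_pts_def by auto

lemma I_down: "a \<in> indep_pts p P \<Longrightarrow> b \<in> indep_pts p P \<Longrightarrow> a \<le> c \<Longrightarrow> c \<le> b \<Longrightarrow> c \<in> indep_pts p P"
  unfolding indep_pts_def Np_def Zp_def le_fun_def
  by simp (smt (verit, ccfv_threshold))

lemma Lset_pos:
  assumes u: "u \<in> Np p" and V: "V \<subseteq> Np p" "u \<notin> V" and l: "l \<in> Lset p u V"
  shows "l < p" "1 \<le> u l"
proof -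
  obtain j where j: "j < p" "vadd (vsub u (ebas l)) (ebas j) \<in> V" and lp: "l < p"
    using l unfolding Lset_def by auto
  have "j \<noteq> l"
  proof
    assume "j = l"
    then have "vadd (vsub u (ebas l)) (ebas j) = u" by (auto simp: mv_apply)
    then show False using j V by auto
  qed
  have "0 \<le> vadd (vsub u (ebas l)) (ebas j) l" using j V Np_nonneg by blast
  then show "1 \<le> u l" using \<open>j \<noteq> l\<close> by (simp add: mv_apply)
  show "l < p" by fact
qed

end


definition LL :: "nat \<Rightarrow> (nat \<Rightarrow> int) set \<Rightarrow> (nat \<Rightarrow> nat) \<Rightarrow> (nat \<Rightarrow> int) \<Rightarrow> nat set" where
  "LL p P \<sigma> u = Lset p u {v \<in> P. lex_less p \<sigma> v u}"

definition Phi :: "nat \<Rightarrow> (nat \<Rightarrow> int) set \<Rightarrow> (nat \<Rightarrow> nat) \<Rightarrow> (nat \<Rightarrow> real) \<Rightarrow> (nat \<Rightarrow> int) \<Rightarrow> real" where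
  "Phi p P \<sigma> t u = (\<Prod>i<p. if i \<in> LL p P \<sigma> u then t i ^ nat (u i) - t i ^ (nat (u i) - 1) else t i ^ nat (u i))"

lemma sum_fbox_nat: "(\<Sum>k\<le>N. fbox k x) = x ^ N"
  by (induction N) (auto simp: fbox_def)

lemma sum_fbox: "0 \<le> m \<Longrightarrow> (\<Sum>k\<in>{0..m}. fbox (nat k) x) = x ^ nat m"
proof -
  assume m: "0 \<le> m"
  have "{0..m} = int ` {..nat m}" using m
    by (auto simp: image_iff intro!: bexI[where x="nat _"])
  then have "(\<Sum>k\<in>{0..m}. fbox (nat k) x) = (\<Sum>k\<le>nat m. fbox k x)"
    by (simp add: sum.reindex)
  then show ?thesis by (simp add: sum_fbox_nat)
qed

context
  fixes p :: nat and P :: "(nat \<Rightarrow> int) set" and \<sigma> :: "nat \<Rightarrow> nat"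
  assumes pm: "polymatroid p P" and bij: "bij_betw \<sigma> {..<p} {..<p}"
begin

lemma LL_pos: "u \<in> P \<Longrightarrow> l \<in> LL p P \<sigma> u \<Longrightarrow> l < p \<and> 1 \<le> u l"
  unfolding LL_def using Lset_pos[OF pm, of u "{v \<in> P. lex_less p \<sigma> v u}" l] P_Np[OF pm]
  by (auto simp: lex_irrefl)

lemma shelling:
  assumes u: "u \<in> P" and nu: "n \<le> u"
  shows "(\<exists>v\<in>P. lex_less p \<sigma> v u \<and> n \<le> v) \<longleftrightarrow> (\<exists>l\<in>LL p P \<sigma> u. n l < u l)"
proof
  assume "\<exists>v\<in>P. lex_less p \<sigma> v u \<and> n \<le> v"
  then obtain v where v: "v \<in> P" "lex_less p \<sigma> v u" "n \<le> v" by auto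
  then obtain k where k: "k < p" "\<forall>l<k. v (\<sigma> l) = u (\<sigma> l)" "v (\<sigma> k) < u (\<sigma> k)"
    unfolding lex_less_def by auto
  define i0 where "i0 = \<sigma> k"
  have i0p: "i0 < p" using bij k(1) unfolding bij_betw_def i0_def by auto
  obtain j where j: "j < p" "u j < v j" and w: "vadd (vsub u (ebas i0)) (ebas j) \<in> P"
    using exch[OF pm u v(1) i0p] k(3) unfolding i0_def by auto
  have ji: "j \<noteq> i0" using j k(3) unfolding i0_def by auto
  have "lex_less p \<sigma> (vadd (vsub u (ebas i0)) (ebas j)) u"
    unfolding lex_less_def
  proof (intro conjI exI[of _ k])
    show "vadd (vsub u (ebas i0)) (ebas j) \<noteq> u"
    proof
      assume "vadd (vsub u (ebas i0)) (ebas j) = u"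
      from fun_cong[OF this, of i0] ji show False by (simp add: mv_apply)
    qed
    show "k < p" by fact
    show "\<forall>l<k. vadd (vsub u (ebas i0)) (ebas j) (\<sigma> l) = u (\<sigma> l)"
    proof (intro allI impI)
      fix l assume lk: "l < k"
      have "\<sigma> l \<noteq> i0" using bij lk k(1) unfolding bij_betw_def inj_on_def i0_def
        by (metis lessThan_iff less_trans nat_neq_iff)
      moreover have "\<sigma> l \<noteq> j" using k(2) lk j(2) by auto
      ultimately show "vadd (vsub u (ebas i0)) (ebas j) (\<sigma> l) = u (\<sigma> l)" by (simp add: mv_apply)
    qed
    show "vadd (vsub u (ebas i0)) (ebas j) (\<sigma> k) < u (\<sigma> k)"
      using ji by (simp add: mv_apply i0_def[symmetric])
  qed
  then have "i0 \<in> LL p P \<sigma> u" unfolding LL_def Lset_def using i0p j(1) w by auto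
  moreover have "n i0 < u i0" using v(3) k(3) unfolding i0_def le_fun_def
    by (meson order_le_less_trans)
  ultimately show "\<exists>l\<in>LL p P \<sigma> u. n l < u l" by blast
next
  assume "\<exists>l\<in>LL p P \<sigma> u. n l < u l"
  then obtain l j where l: "n l < u l" "j < p" and w: "vadd (vsub u (ebas l)) (ebas j) \<in> P"
    "lex_less p \<sigma> (vadd (vsub u (ebas l)) (ebas j)) u"
    unfolding LL_def Lset_def by auto
  have "n \<le> vadd (vsub u (ebas l)) (ebas j)"
    unfolding le_fun_def
  proof
    fix i show "n i \<le> vadd (vsub u (ebas l)) (ebas j) i"
      using nu l(1) unfolding le_fun_def by (auto simp: mv_apply) (smt (verit))
  qed
  then show "\<exists>v\<in>P. lex_less p \<sigma> v u \<and> n \<le> v" using w by blast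
qed

definition Eu :: "(nat \<Rightarrow> int) \<Rightarrow> (nat \<Rightarrow> int) set" where
  "Eu u = {n \<in> Np p. n \<le> u \<and> (\<forall>v\<in>P. lex_less p \<sigma> v u \<longrightarrow> \<not> n \<le> v)}"

lemma Eu_box: "u \<in> P \<Longrightarrow> Eu u = boxset p (\<lambda>i. if i \<in> LL p P \<sigma> u then {u i} else {0..u i})"
proof (intro equalityI subsetI)
  fix n assume u: "u \<in> P" and n: "n \<in> Eu u"
  then have n1: "n \<in> Np p" "n \<le> u" and n2: "\<not> (\<exists>l\<in>LL p P \<sigma> u. n l < u l)"
    using shelling[OF u] unfolding Eu_def by auto
  show "n \<in> boxset p (\<lambda>i. if i \<in> LL p P \<sigma> u then {u i} else {0..u i})"
    unfolding boxset_def using n1 n2 Np_nonneg[OF n1(1)] Np_zero[OF n1(1)] unfolding le_fun_def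
    by (auto simp: not_less) (meson order_antisym)
next
  fix n assume u: "u \<in> P" and n: "n \<in> boxset p (\<lambda>i. if i \<in> LL p P \<sigma> u then {u i} else {0..u i})"
  have uN: "u \<in> Np p" using u P_Np[OF pm] by auto
  have n1: "n \<in> Np p" using n Np_nonneg[OF uN] unfolding boxset_def Np_def Zp_def
    by (auto split: if_splits)
  have n2: "n \<le> u" unfolding le_fun_def
  proof
    fix i show "n i \<le> u i" using n Np_zero[OF uN, of i] unfolding boxset_def
      by (cases "i < p") (auto split: if_splits)
  qed
  have n3: "\<not> (\<exists>l\<in>LL p P \<sigma> u. n l < u l)"
  proof
    assume "\<exists>l\<in>LL p P \<sigma> u. n l < u l"
    then obtain l where l: "l \<in> LL p P \<sigma> u" "n l < u l" by auto
    then have "l < p" using LL_pos[OF u] by auto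
    then have "n l \<in> {u l}" using n l(1) unfolding boxset_def by auto
    then show False using l(2) by auto
  qed
  show "n \<in> Eu u" using n1 n2 n3 shelling[OF u n2] unfolding Eu_def by auto
qed

lemma I_Union: "indep_pts p P = (\<Union>u\<in>P. Eu u)"
proof (intro equalityI subsetI)
  fix n assume n: "n \<in> indep_pts p P"
  let ?S = "{u\<in>P. n \<le> u}"
  have "finite ?S" "?S \<noteq> {}" using P_fin[OF pm] n unfolding indep_pts_def by auto
  then obtain m where m: "m \<in> ?S" "\<forall>y\<in>?S. \<not> lex_less p \<sigma> y m" using lex_min_exists by blast
  then have "n \<in> Eu m" using n unfolding Eu_def indep_pts_def by auto
  then show "n \<in> (\<Union>u\<in>P. Eu u)" using m by auto
next
  fix n assume "n \<in> (\<Union>u\<in>P. Eu u)"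
  then show "n \<in> indep_pts p P" unfolding Eu_def indep_pts_def by auto
qed

lemma Eu_disj: "u \<in> P \<Longrightarrow> v \<in> P \<Longrightarrow> u \<noteq> v \<Longrightarrow> Eu u \<inter> Eu v = {}"
proof -
  assume a: "u \<in> P" "v \<in> P" "u \<noteq> v"
  have "u \<in> Zp p" "v \<in> Zp p" using a P_Np[OF pm] unfolding Np_def by auto
  then have "lex_less p \<sigma> u v \<or> lex_less p \<sigma> v u" using lex_total[OF bij] a(3) by blast
  then show ?thesis using a unfolding Eu_def by auto
qed

lemma Box_Phi: "Box p P t = (\<Sum>u\<in>P. Phi p P \<sigma> t u)"
proof -
  have finE: "\<And>u. u \<in> P \<Longrightarrow> finite (Eu u)"
    by (subst Eu_box) (auto intro!: finite_boxset)
  have "Box p P t = (\<Sum>u\<in>P. \<Sum>n\<in>Eu u. \<Prod>i<p. fbox (nat (n i)) (t i))"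
    unfolding Box_def I_Union
    by (rule sum.UNION_disjoint) (use P_fin[OF pm] finE Eu_disj in auto)
  also have "\<dots> = (\<Sum>u\<in>P. Phi p P \<sigma> t u)"
  proof (rule sum.cong[OF refl])
    fix u assume u: "u \<in> P"
    have uN: "u \<in> Np p" using u P_Np[OF pm] by auto
    have "(\<Sum>n\<in>Eu u. \<Prod>i<p. fbox (nat (n i)) (t i))
       = (\<Prod>i<p. \<Sum>k\<in>(if i \<in> LL p P \<sigma> u then {u i} else {0..u i}). fbox (nat k) (t i))"
      unfolding Eu_box[OF u] by (rule sum_prod_boxset)
    also have "\<dots> = Phi p P \<sigma> t u"
      unfolding Phi_def
    proof (rule prod.cong[OF refl])
      fix i assume "i \<in> {..<p}"
      show "(\<Sum>k\<in>(if i \<in> LL p P \<sigma> u then {u i} else {0..u i}). fbox (nat k) (t i)) =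
        (if i \<in> LL p P \<sigma> u then t i ^ nat (u i) - t i ^ (nat (u i) - 1) else t i ^ nat (u i))"
        using LL_pos[OF u, of i] sum_fbox[OF Np_nonneg[OF uN, of i]]
        by (auto simp: fbox_def)
    qed
    finally show "(\<Sum>n\<in>Eu u. \<Prod>i<p. fbox (nat (n i)) (t i)) = Phi p P \<sigma> t u" .
  qed
  finally show ?thesis .
qed

end


lemma power_nat_sum: "(\<forall>i\<in>A. 0 \<le> d i) \<Longrightarrow> (x::'a::comm_monoid_mult) ^ nat (\<Sum>i\<in>A. d i) = (\<Prod>i\<in>A. x ^ nat (d i))"
proof (induction A rule: infinite_finite_induct)
  case (insert a F)
  then have "nat (\<Sum>i\<in>insert a F. d i) = nat (d a) + nat (\<Sum>i\<in>F. d i)"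
    by (simp add: nat_add_distrib sum_nonneg)
  then show ?case using insert by (simp add: power_add)
qed auto

lemma tmon_nat: "(\<And>i. i < p \<Longrightarrow> 0 \<le> n i) \<Longrightarrow> tmon p t n = (\<Prod>i<p. t i ^ nat (n i))"
  unfolding tmon_def
  by (rule prod.cong[OF refl]) (metis lessThan_iff nat_0_le power_int_of_nat)

lemma lex_id_move:
  assumes "l < p" "j < p"
  shows "lex_less p id (vadd (vsub u (ebas l)) (ebas j)) u \<longleftrightarrow> l < j"
proof
  assume "l < j"
  then show "lex_less p id (vadd (vsub u (ebas l)) (ebas j)) u"
    unfolding lex_less_def using assms
    by (intro conjI exI[of _ l]) (auto simp: mv_apply dest: fun_cong[of _ _ l])
next
  assume a: "lex_less p id (vadd (vsub u (ebas l)) (ebas j)) u"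
  then obtain k where k: "\<forall>m<k. vadd (vsub u (ebas l)) (ebas j) m = u m"
     "vadd (vsub u (ebas l)) (ebas j) k < u k" and ne: "vadd (vsub u (ebas l)) (ebas j) \<noteq> u"
    unfolding lex_less_def by auto
  have "j \<noteq> l" using ne by (auto simp: mv_apply)
  have "k = l" using k(2) by (auto simp: mv_apply split: if_splits)
  show "l < j"
  proof (rule ccontr)
    assume "\<not> l < j"
    then have "j < k" using \<open>j \<noteq> l\<close> \<open>k = l\<close> by auto
    then show False using k(1) \<open>j \<noteq> l\<close> by (auto simp: mv_apply)
  qed
qed

context
  fixes p :: nat and P :: "(nat \<Rightarrow> int) set" and \<sigma> :: "nat \<Rightarrow> nat"
  assumes pm: "polymatroid p P"
begin

lemma LL_pos': "u \<in> P \<Longrightarrow> l \<in> LL p P \<sigma> u \<Longrightarrow> l < p \<and> 1 \<le> u l"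
  unfolding LL_def using Lset_pos[OF pm, of u "{v \<in> P. lex_less p \<sigma> v u}" l] P_Np[OF pm]
  by (auto simp: lex_irrefl)

lemma St_box:
  assumes u: "u \<in> P"
  shows "St p u {v \<in> P. lex_less p \<sigma> v u} = boxset p (\<lambda>i. if i \<in> LL p P \<sigma> u then {u i - 1, u i} else {u i})"
proof (intro equalityI subsetI)
  have uN: "u \<in> Np p" using u P_Np[OF pm] by auto
  fix n assume "n \<in> St p u {v \<in> P. lex_less p \<sigma> v u}"
  then obtain J where J: "J \<subseteq> LL p P \<sigma> u" "n = vsub u (eset J)" unfolding St_def LL_def by auto
  have "\<forall>i\<in>J. i < p \<and> i \<in> LL p P \<sigma> u" using J(1) LL_pos'[OF u] by auto
  then show "n \<in> boxset p (\<lambda>i. if i \<in> LL p P \<sigma> u then {u i - 1, u i} else {u i})"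
    unfolding boxset_def using J(2) Np_zero[OF uN]
    by (auto simp: vsub_def eset_def)
next
  have uN: "u \<in> Np p" using u P_Np[OF pm] by auto
  fix n assume n: "n \<in> boxset p (\<lambda>i. if i \<in> LL p P \<sigma> u then {u i - 1, u i} else {u i})"
  define J where "J = {i \<in> LL p P \<sigma> u. n i = u i - 1}"
  have "n = vsub u (eset J)"
  proof
    fix i show "n i = vsub u (eset J) i"
    proof (cases "i < p")
      case True then show ?thesis using n unfolding boxset_def J_def vsub_def eset_def
        by (auto split: if_splits)
    next
      case False
      then have "i \<notin> J" using LL_pos'[OF u] unfolding J_def by auto
      then show ?thesis using False n Np_zero[OF uN, of i] unfolding boxset_def vsub_def eset_def
        by auto
    qed
  qed
  moreover have "J \<subseteq> Lset p u {v \<in> P. lex_less p \<sigma> v u}" unfolding J_def LL_def by auto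
  ultimately show "n \<in> St p u {v \<in> P. lex_less p \<sigma> v u}" unfolding St_def by auto
qed

lemma St_I: "u \<in> P \<Longrightarrow> St p u {v \<in> P. lex_less p \<sigma> v u} \<subseteq> indep_pts p P"
proof
  fix n assume u: "u \<in> P" and n: "n \<in> St p u {v \<in> P. lex_less p \<sigma> v u}"
  have uN: "u \<in> Np p" using u P_Np[OF pm] by auto
  have nb: "n \<in> boxset p (\<lambda>i. if i \<in> LL p P \<sigma> u then {u i - 1, u i} else {u i})"
    using n St_box[OF u] by auto
  have "n \<in> Np p" using nb LL_pos'[OF u] Np_nonneg[OF uN] unfolding boxset_def Np_def Zp_def
    by (auto split: if_splits) (smt (verit) insertE singletonD)
  moreover have "n \<le> u" unfolding le_fun_def
  proof
    fix i show "n i \<le> u i" using nb Np_zero[OF uN, of i] unfolding boxset_def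
      by (cases "i < p") (auto split: if_splits)
  qed
  ultimately show "n \<in> indep_pts p P" using u unfolding indep_pts_def by auto
qed

lemma Stal_Phi: "Stal p \<sigma> P t = (\<Sum>u\<in>P. Phi p P \<sigma> t u)"
proof -
  let ?V = "\<lambda>u. {v \<in> P. lex_less p \<sigma> v u}"
  let ?X = "\<lambda>n. (-1::real) ^ nat (rk p P - vnorm p n) * tmon p t n"
  have "Stal p \<sigma> P t = (\<Sum>n\<in>indep_pts p P. \<Sum>u\<in>P. if n \<in> St p u (?V u) then ?X n else 0)"
    unfolding Stal_def
  proof (rule sum.cong[OF refl])
    fix n
    have "real (cnt p \<sigma> P n) = (\<Sum>u\<in>P. if n \<in> St p u (?V u) then 1 else 0)"
      unfolding cnt_def using P_fin[OF pm] by (simp add: sum.inter_filter[symmetric])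
    then show "(-1) ^ nat (rk p P - vnorm p n) * real (cnt p \<sigma> P n) * tmon p t n =
      (\<Sum>u\<in>P. if n \<in> St p u (?V u) then ?X n else 0)"
      by (simp add: sum_distrib_left sum_distrib_right) (intro sum.cong refl, simp)
  qed
  also have "\<dots> = (\<Sum>u\<in>P. \<Sum>n\<in>indep_pts p P. if n \<in> St p u (?V u) then ?X n else 0)"
    by (rule sum.swap)
  also have "\<dots> = (\<Sum>u\<in>P. \<Sum>n\<in>St p u (?V u). ?X n)"
  proof (rule sum.cong[OF refl])
    fix u assume u: "u \<in> P"
    have "(\<Sum>n\<in>indep_pts p P. if n \<in> St p u (?V u) then ?X n else 0)
       = (\<Sum>n\<in>{n \<in> indep_pts p P. n \<in> St p u (?V u)}. ?X n)"
      using I_fin[OF pm] by (simp add: sum.inter_filter)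
    also have "{n \<in> indep_pts p P. n \<in> St p u (?V u)} = St p u (?V u)" using St_I[OF u] by auto
    finally show "(\<Sum>n\<in>indep_pts p P. if n \<in> St p u (?V u) then ?X n else 0) = (\<Sum>n\<in>St p u (?V u). ?X n)" .
  qed
  also have "\<dots> = (\<Sum>u\<in>P. Phi p P \<sigma> t u)"
  proof (rule sum.cong[OF refl])
    fix u assume u: "u \<in> P"
    have uN: "u \<in> Np p" using u P_Np[OF pm] by auto
    let ?A = "\<lambda>i. if i \<in> LL p P \<sigma> u then {u i - 1, u i} else {u i}"
    let ?h = "\<lambda>i k. (-1::real) ^ nat (u i - k) * t i ^ nat k"
    have "(\<Sum>n\<in>St p u (?V u). ?X n) = (\<Sum>n\<in>boxset p ?A. \<Prod>i<p. ?h i (n i))"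
    proof (rule sum.cong)
      show "St p u (?V u) = boxset p ?A" by (rule St_box[OF u])
    next
      fix n assume n: "n \<in> boxset p ?A"
      have nI: "n \<in> indep_pts p P" using n St_box[OF u] St_I[OF u] by auto
      then have nN: "n \<in> Np p" unfolding indep_pts_def by auto
      have nu: "\<forall>i<p. 0 \<le> u i - n i" using nI n unfolding boxset_def
        by (auto split: if_splits)
      have "rk p P - vnorm p n = (\<Sum>i<p. u i - n i)"
        unfolding rk_eq[OF pm u] vnorm_def by (simp add: sum_subtractf)
      then have "(-1::real) ^ nat (rk p P - vnorm p n) = (\<Prod>i<p. (-1) ^ nat (u i - n i))"
        using power_nat_sum[of "{..<p}" "\<lambda>i. u i - n i"] nu by simp
      moreover have "tmon p t n = (\<Prod>i<p. t i ^ nat (n i))"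
        by (rule tmon_nat) (rule Np_nonneg[OF nN])
      ultimately show "?X n = (\<Prod>i<p. ?h i (n i))" by (simp add: prod.distrib)
    qed
    also have "\<dots> = (\<Prod>i<p. \<Sum>k\<in>?A i. ?h i k)" by (rule sum_prod_boxset)
    also have "\<dots> = Phi p P \<sigma> t u"
      unfolding Phi_def
    proof (rule prod.cong[OF refl])
      fix i assume "i \<in> {..<p}"
      show "(\<Sum>k\<in>?A i. ?h i k) =
        (if i \<in> LL p P \<sigma> u then t i ^ nat (u i) - t i ^ (nat (u i) - 1) else t i ^ nat (u i))"
      proof (cases "i \<in> LL p P \<sigma> u")
        case True
        then have "1 \<le> u i" using LL_pos'[OF u] by auto
        then have "nat (u i - 1) = nat (u i) - 1" by auto
        then show ?thesis using True \<open>1 \<le> u i\<close> by simp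
      qed simp
    qed
    finally show "(\<Sum>n\<in>St p u (?V u). ?X n) = Phi p P \<sigma> t u" .
  qed
  finally show ?thesis .
qed

end


context
  fixes p :: nat and P :: "(nat \<Rightarrow> int) set"
  assumes pm: "polymatroid p P"
begin

lemma Cset_fin: "finite {n \<in> Np p. vnorm p n = r}"
proof (rule finite_subset[of _ "boxset p (\<lambda>_. {0..r})"])
  show "finite (boxset p (\<lambda>_. {0..r}))" by (rule finite_boxset) auto
  show "{n \<in> Np p. vnorm p n = r} \<subseteq> boxset p (\<lambda>_. {0..r})"
  proof
    fix n assume n: "n \<in> {n \<in> Np p. vnorm p n = r}"
    have "\<forall>i<p. n i \<le> r"
    proof (intro allI impI)
      fix i assume "i < p"
      then have "n i \<le> (\<Sum>j<p. n j)"
        using n by (intro member_le_sum) (auto intro: Np_nonneg)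
      then show "n i \<le> r" using n unfolding vnorm_def by auto
    qed
    then show "n \<in> boxset p (\<lambda>_. {0..r})" using n Np_nonneg[of n p] Np_zero[of n p]
      unfolding boxset_def by auto
  qed
qed

lemma LL_id: "l < p \<Longrightarrow> l \<in> LL p P id u \<longleftrightarrow> (\<exists>j. l < j \<and> j < p \<and> vadd (vsub u (ebas l)) (ebas j) \<in> P)"
  unfolding LL_def Lset_def using lex_id_move by auto

lemma Cave_Phi:
  assumes t: "\<forall>i<p. t i \<noteq> 0"
  shows "Cave p P t = (\<Sum>u\<in>P. Phi p P id t u)"
proof -
  let ?c = "\<lambda>n i. (if \<exists>j. i < j \<and> j < p \<and> vadd (vsub n (ebas i)) (ebas j) \<in> P then 1 else 0::real)"
  let ?g = "\<lambda>n. (\<Prod>i<p - 1. (1 - ?c n i * inverse (t i))) * tmon p t n"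
  have "Cave p P t = (\<Sum>n\<in>{n \<in> Np p. vnorm p n = rk p P}. if n \<in> P then ?g n else 0)"
    unfolding Cave_def ind_def by (intro sum.cong refl) auto
  also have "\<dots> = (\<Sum>n\<in>P. if n \<in> P then ?g n else 0)"
    by (rule sum.mono_neutral_right[OF Cset_fin]) (use P_Np[OF pm] rk_eq[OF pm] in auto)
  also have "\<dots> = (\<Sum>u\<in>P. Phi p P id t u)"
  proof (rule sum.cong[OF refl])
    fix u assume u: "u \<in> P"
    have uN: "u \<in> Np p" using u P_Np[OF pm] by auto
    have prodp: "(\<Prod>i<p - 1. (1 - ?c u i * inverse (t i))) = (\<Prod>i<p. (1 - ?c u i * inverse (t i)))"
    proof (cases p)
      case (Suc q)
      have "{..<p} = insert q {..<q}" using Suc by auto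
      moreover have "?c u q = 0" using Suc by auto
      ultimately show ?thesis using Suc by simp
    qed simp
    have "?g u = (\<Prod>i<p. (1 - ?c u i * inverse (t i)) * t i ^ nat (u i))"
      unfolding prodp tmon_nat[OF Np_nonneg[OF uN]] by (simp add: prod.distrib)
    also have "\<dots> = Phi p P id t u"
      unfolding Phi_def
    proof (rule prod.cong[OF refl])
      fix i assume i: "i \<in> {..<p}"
      show "(1 - ?c u i * inverse (t i)) * t i ^ nat (u i) =
        (if i \<in> LL p P id u then t i ^ nat (u i) - t i ^ (nat (u i) - 1) else t i ^ nat (u i))"
      proof (cases "i \<in> LL p P id u")
        case True
        then have c: "?c u i = 1" using LL_id[of i u] i by auto
        have "1 \<le> u i" using LL_pos'[OF pm u True] by auto
        then have "nat (u i) = Suc (nat (u i) - 1)" by linarith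
        then have "t i ^ nat (u i) = t i * t i ^ (nat (u i) - 1)"
          by (metis power_Suc)
        then show ?thesis using True c t i by (simp add: field_simps)
      next
        case False
        then have "?c u i = 0" using LL_id[of i u] i by auto
        then show ?thesis using False by simp
      qed
    qed
    finally show "(if u \<in> P then ?g u else 0) = Phi p P id t u" using u by simp
  qed
  finally show ?thesis .
qed

end


lemma mobius_unique:
  assumes fin: "finite S"
    and tr: "\<And>x y z. x \<in> S \<Longrightarrow> y \<in> S \<Longrightarrow> z \<in> S \<Longrightarrow> le x y \<Longrightarrow> le y z \<Longrightarrow> le x z"
    and an: "\<And>x y. x \<in> S \<Longrightarrow> y \<in> S \<Longrightarrow> le x y \<Longrightarrow> le y x \<Longrightarrow> x = y"
    and f: "is_mobius S le f" and g: "is_mobius S le g"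
  shows "f = g"
proof (intro ext)
  fix m n
  show "f m n = g m n"
  proof (cases "m \<in> S")
    case False then show ?thesis using f g unfolding is_mobius_def by auto
  next
    case mS: True
    have "\<forall>n. n \<in> S \<longrightarrow> f m n = g m n"
    proof (intro allI)
      fix n
      show "n \<in> S \<longrightarrow> f m n = g m n"
      proof (induction n rule: measure_induct_rule[of "\<lambda>n. card {a\<in>S. le a n \<and> a \<noteq> n}"])
        case (less n)
        show ?case
        proof
          assume nS: "n \<in> S"
          have IH: "\<And>a. a \<in> {a\<in>S. le m a \<and> le a n \<and> a \<noteq> n} \<Longrightarrow> f m a = g m a"
          proof -
            fix a assume a: "a \<in> {a\<in>S. le m a \<and> le a n \<and> a \<noteq> n}"
            have "{x\<in>S. le x a \<and> x \<noteq> a} \<subset> {x\<in>S. le x n \<and> x \<noteq> n}"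
            proof
              show "{x\<in>S. le x a \<and> x \<noteq> a} \<subseteq> {x\<in>S. le x n \<and> x \<noteq> n}"
                using a tr an nS by blast
              show "{x\<in>S. le x a \<and> x \<noteq> a} \<noteq> {x\<in>S. le x n \<and> x \<noteq> n}"
                using a by blast
            qed
            then have "card {x\<in>S. le x a \<and> x \<noteq> a} < card {x\<in>S. le x n \<and> x \<noteq> n}"
              by (rule psubset_card_mono[rotated]) (use fin in auto)
            then show "f m a = g m a" using less a by blast
          qed
          have ff: "f m n = (if m = n then 1 else if le m n then - (\<Sum>a\<in>{a\<in>S. le m a \<and> le a n \<and> a \<noteq> n}. f m a) else 0)"
            using f mS nS unfolding is_mobius_def by blast
          have gg: "g m n = (if m = n then 1 else if le m n then - (\<Sum>a\<in>{a\<in>S. le m a \<and> le a n \<and> a \<noteq> n}. g m a) else 0)"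
            using g mS nS unfolding is_mobius_def by blast
          have "sum (f m) {a\<in>S. le m a \<and> le a n \<and> a \<noteq> n} = sum (g m) {a\<in>S. le m a \<and> le a n \<and> a \<noteq> n}"
            by (rule sum.cong) (auto simp: IH)
          then show "f m n = g m n" unfolding ff gg by simp
        qed
      qed
    qed
    then show ?thesis using f g mS unfolding is_mobius_def by metis
  qed
qed

definition eps :: "nat \<Rightarrow> (nat \<Rightarrow> int) \<Rightarrow> (nat \<Rightarrow> int) \<Rightarrow> int" where
  "eps p a c = (\<Prod>i<p. (-1) ^ nat (c i - a i))"

definition adj :: "(nat \<Rightarrow> int) \<Rightarrow> (nat \<Rightarrow> int) \<Rightarrow> bool" where
  "adj a c \<longleftrightarrow> a \<le> c \<and> (\<forall>i. c i \<le> a i + 1)"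

definition F0 :: "nat \<Rightarrow> (nat \<Rightarrow> int) set \<Rightarrow> (nat \<Rightarrow> int) \<Rightarrow> (nat \<Rightarrow> int) \<Rightarrow> int" where
  "F0 p I a c = (if a \<in> I \<and> c \<in> I \<and> adj a c then eps p a c else 0)"

definition G :: "nat \<Rightarrow> (nat \<Rightarrow> int) set \<Rightarrow> (nat \<Rightarrow> int) \<Rightarrow> int" where
  "G p I a = (\<Sum>c\<in>{c\<in>I. a \<le> c}. F0 p I a c)"

definition Fm :: "nat \<Rightarrow> (nat \<Rightarrow> int) set \<Rightarrow> (nat \<Rightarrow> int) option \<Rightarrow> (nat \<Rightarrow> int) option \<Rightarrow> int" where
  "Fm p I x y = (case x of None \<Rightarrow> (if y = None then 1 else 0)
      | Some a \<Rightarrow> (case y of None \<Rightarrow> (if a \<in> I then - G p I a else 0) | Some c \<Rightarrow> F0 p I a c))"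

lemma hat_le_trans: "hat_le x y \<Longrightarrow> hat_le y z \<Longrightarrow> hat_le x z"
  unfolding hat_le_def by (auto split: option.splits)

lemma hat_le_antisym: "hat_le x y \<Longrightarrow> hat_le y x \<Longrightarrow> x = y"
  unfolding hat_le_def by (auto split: option.splits)

context
  fixes p :: nat and P :: "(nat \<Rightarrow> int) set"
  assumes pm: "polymatroid p P"
begin

abbreviation "II \<equiv> indep_pts p P"

lemma I_Np: "a \<in> II \<Longrightarrow> a \<in> Np p" unfolding indep_pts_def by auto

lemma key_sum:
  assumes a: "a \<in> II" and b: "b \<in> II" and ab: "a \<le> b" "a \<noteq> b"
  shows "(\<Sum>c\<in>{c\<in>II. a \<le> c \<and> c \<le> b}. F0 p II a c) = 0"
proof -
  let ?B = "\<lambda>i. if a i < b i then {a i, a i + 1} else {a i}"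
  have aN: "a \<in> Np p" and bN: "b \<in> Np p" using a b by (auto intro: I_Np)
  have "(\<Sum>c\<in>{c\<in>II. a \<le> c \<and> c \<le> b}. F0 p II a c)
      = (\<Sum>c\<in>{c\<in>{c\<in>II. a \<le> c \<and> c \<le> b}. adj a c}. eps p a c)"
    unfolding F0_def using I_fin[OF pm] a by (simp add: sum.inter_filter[symmetric])
  also have "{c\<in>{c\<in>II. a \<le> c \<and> c \<le> b}. adj a c} = boxset p ?B"
  proof (intro equalityI subsetI)
    fix c assume c: "c \<in> {c\<in>{c\<in>II. a \<le> c \<and> c \<le> b}. adj a c}"
    then have cN: "c \<in> Np p" by (auto intro: I_Np)
    show "c \<in> boxset p ?B" unfolding boxset_def
    proof (intro CollectI conjI allI impI)
      fix i assume "i < p"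
      show "c i \<in> ?B i" using c unfolding adj_def le_fun_def
        by (auto) (smt (verit))+
    next
      fix i assume "p \<le> i" then show "c i = 0" by (rule Np_zero[OF cN])
    qed
  next
    fix c assume c: "c \<in> boxset p ?B"
    have ac: "a \<le> c" unfolding le_fun_def
    proof
      fix i show "a i \<le> c i" using c Np_zero[OF aN, of i] unfolding boxset_def
        by (cases "i < p") (auto split: if_splits)
    qed
    have cb: "c \<le> b" unfolding le_fun_def
    proof
      fix i show "c i \<le> b i" using c Np_zero[OF bN, of i] ab(1) unfolding boxset_def le_fun_def
        by (cases "i < p") (auto split: if_splits)
    qed
    have ad: "adj a c" unfolding adj_def using ac
    proof (intro conjI allI)
      fix i show "c i \<le> a i + 1" using c Np_zero[OF aN, of i] unfolding boxset_def
        by (cases "i < p") (auto split: if_splits)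
    qed simp
    show "c \<in> {c\<in>{c\<in>II. a \<le> c \<and> c \<le> b}. adj a c}"
      using I_down[OF pm a b ac cb] ac cb ad by auto
  qed
  also have "(\<Sum>c\<in>boxset p ?B. eps p a c) = (\<Prod>i<p. \<Sum>k\<in>?B i. (-1::int) ^ nat (k - a i))"
    unfolding eps_def by (rule sum_prod_boxset)
  also have "\<dots> = 0"
  proof (rule prod_zero)
    obtain i where i: "a i \<noteq> b i" using ab(2) by auto
    have "i < p" using i Np_zero[OF aN, of i] Np_zero[OF bN, of i] by (cases "i < p") auto
    moreover have "a i < b i" using i ab(1) unfolding le_fun_def by (simp add: order_less_le)
    ultimately show "\<exists>i\<in>{..<p}. (\<Sum>k\<in>?B i. (-1::int) ^ nat (k - a i)) = 0" by auto
  qed simp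
  finally show ?thesis .
qed

lemma hatP_mem: "x \<in> hatP p P \<longleftrightarrow> x = None \<or> (\<exists>a\<in>II. x = Some a)"
  unfolding hatP_def by auto

lemma Fm_mobius: "is_mobius (hatP p P) hat_le (Fm p II)"
  unfolding is_mobius_def
proof (intro conjI allI impI ballI)
  fix m n :: "(nat \<Rightarrow> int) option"
  assume "m \<notin> hatP p P \<or> n \<notin> hatP p P"
  then show "Fm p II m n = 0" unfolding hatP_mem Fm_def F0_def
    by (auto split: option.splits)
next
  fix m n assume m: "m \<in> hatP p P" and n: "n \<in> hatP p P"
  show "Fm p II m n = (if m = n then 1 else if hat_le m n
      then - (\<Sum>a\<in>{a \<in> hatP p P. hat_le m a \<and> hat_le a n \<and> a \<noteq> n}. Fm p II m a) else 0)"
  proof (cases m)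
    case None
    then show ?thesis using n unfolding Fm_def hat_le_def by (auto split: option.splits)
  next
    fix a assume Sa: "m = Some a"
    then have aI: "a \<in> II" using m hatP_mem by auto
    show ?thesis
    proof (cases n)
      case None
      have "{x \<in> hatP p P. hat_le m x \<and> hat_le x n \<and> x \<noteq> n} = Some ` {c\<in>II. a \<le> c}"
        using Sa None unfolding hatP_mem hat_le_def by (auto split: option.splits)
      then have "(\<Sum>x\<in>{x \<in> hatP p P. hat_le m x \<and> hat_le x n \<and> x \<noteq> n}. Fm p II m x) = G p II a"
        using Sa unfolding G_def Fm_def by (simp add: sum.reindex)
      then show ?thesis using Sa None aI unfolding Fm_def hat_le_def by simp
    next
      fix b assume Sb: "n = Some b"
      then have bI: "b \<in> II" using n hatP_mem by auto
      show ?thesis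
      proof (cases "a = b")
        case True
        then show ?thesis using Sa Sb aI unfolding Fm_def F0_def adj_def eps_def by simp
      next
        case False
        show ?thesis
        proof (cases "a \<le> b")
          case False
          then show ?thesis using Sa Sb \<open>a \<noteq> b\<close> unfolding Fm_def F0_def adj_def hat_le_def by auto
        next
          case True
          have "{x \<in> hatP p P. hat_le m x \<and> hat_le x n \<and> x \<noteq> n} = Some ` {c\<in>II. a \<le> c \<and> c \<le> b \<and> c \<noteq> b}"
            using Sa Sb unfolding hatP_mem hat_le_def by (auto split: option.splits)
          then have s: "(\<Sum>x\<in>{x \<in> hatP p P. hat_le m x \<and> hat_le x n \<and> x \<noteq> n}. Fm p II m x)
              = (\<Sum>c\<in>{c\<in>II. a \<le> c \<and> c \<le> b \<and> c \<noteq> b}. F0 p II a c)"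
            using Sa unfolding Fm_def by (simp add: sum.reindex)
          have "{c\<in>II. a \<le> c \<and> c \<le> b} = insert b {c\<in>II. a \<le> c \<and> c \<le> b \<and> c \<noteq> b}"
            using bI True by auto
          then have "0 = F0 p II a b + (\<Sum>c\<in>{c\<in>II. a \<le> c \<and> c \<le> b \<and> c \<noteq> b}. F0 p II a c)"
            using key_sum[OF aI bI True False] I_fin[OF pm] by simp
          then show ?thesis using s Sa Sb False True unfolding Fm_def hat_le_def by simp
        qed
      qed
    qed
  qed
qed

lemma muP_eq: "n \<in> II \<Longrightarrow> muP p P n = G p II n"
proof -
  assume n: "n \<in> II"
  have fin: "finite (hatP p P)" unfolding hatP_def using I_fin[OF pm] by auto
  have "mobius (hatP p P) hat_le = Fm p II"
    unfolding mobius_def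
  proof (rule the_equality)
    show "is_mobius (hatP p P) hat_le (Fm p II)" by (rule Fm_mobius)
  next
    fix f assume "is_mobius (hatP p P) hat_le f"
    then show "f = Fm p II"
      by (rule mobius_unique[OF fin, rotated 2, OF _ Fm_mobius]) (auto intro: hat_le_trans hat_le_antisym)
  qed
  then show ?thesis unfolding muP_def using n by (simp add: Fm_def)
qed

lemma Box_Mob: "Box p P t = Mob p P t"
proof -
  let ?h = "\<lambda>c n. real_of_int (eps p c n) * tmon p t c"
  have W: "(\<Prod>i<p. fbox (nat (n i)) (t i)) = (\<Sum>c\<in>{c\<in>II. adj c n}. ?h c n)" if nI: "n \<in> II" for n
  proof -
    have nN: "n \<in> Np p" using nI by (rule I_Np)
    let ?C = "\<lambda>i. if n i = 0 then {0} else {n i - 1, n i}"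
    let ?g = "\<lambda>i k. (-1::real) ^ nat (n i - k) * t i ^ nat k"
    have "(\<Prod>i<p. fbox (nat (n i)) (t i)) = (\<Prod>i<p. \<Sum>k\<in>?C i. ?g i k)"
    proof (rule prod.cong[OF refl])
      fix i assume "i \<in> {..<p}"
      have "0 \<le> n i" by (rule Np_nonneg[OF nN])
      show "fbox (nat (n i)) (t i) = (\<Sum>k\<in>?C i. ?g i k)"
      proof (cases "n i = 0")
        case False
        then have "nat (n i - 1) = nat (n i) - 1" "nat (n i) \<noteq> 0" using \<open>0 \<le> n i\<close> by auto
        then show ?thesis using False unfolding fbox_def by simp
      qed (simp add: fbox_def)
    qed
    also have "\<dots> = (\<Sum>c\<in>boxset p ?C. \<Prod>i<p. ?g i (c i))" by (rule sum_prod_boxset[symmetric])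
    also have "\<dots> = (\<Sum>c\<in>{c\<in>II. adj c n}. ?h c n)"
    proof (rule sum.cong)
      show "boxset p ?C = {c\<in>II. adj c n}"
      proof (intro equalityI subsetI)
        fix c assume c: "c \<in> boxset p ?C"
        have cn: "c \<le> n" unfolding le_fun_def
        proof
          fix i show "c i \<le> n i" using c Np_zero[OF nN, of i] unfolding boxset_def
            by (cases "i < p") (auto split: if_splits)
        qed
        have cN: "c \<in> Np p" using c Np_nonneg[OF nN] unfolding boxset_def Np_def Zp_def
          by (auto split: if_splits) (smt (verit) insertE singletonD)
        have ad: "adj c n" unfolding adj_def using cn
        proof (intro conjI allI)
          fix i show "n i \<le> c i + 1" using c Np_zero[OF nN, of i] unfolding boxset_def
            by (cases "i < p") (auto split: if_splits)
        qed simp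
        have "c \<in> II" using cN cn nI unfolding indep_pts_def by (auto intro: order_trans)
        then show "c \<in> {c\<in>II. adj c n}" using ad by auto
      next
        fix c assume c: "c \<in> {c\<in>II. adj c n}"
        then have cN: "c \<in> Np p" by (auto intro: I_Np)
        show "c \<in> boxset p ?C" unfolding boxset_def
        proof (intro CollectI conjI allI impI)
          fix i assume "i < p"
          show "c i \<in> ?C i" using c Np_nonneg[OF cN, of i] unfolding adj_def le_fun_def
            by (auto) (smt (verit))+
        next
          fix i assume "p \<le> i" then show "c i = 0" by (rule Np_zero[OF cN])
        qed
      qed
    next
      fix c assume c: "c \<in> {c\<in>II. adj c n}"
      then have cN: "c \<in> Np p" by (auto intro: I_Np)
      show "(\<Prod>i<p. ?g i (c i)) = ?h c n"
        unfolding eps_def tmon_nat[OF Np_nonneg[OF cN]] by (simp add: prod.distrib)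
    qed
    finally show ?thesis .
  qed
  have "Box p P t = (\<Sum>n\<in>II. \<Sum>c\<in>{c\<in>II. adj c n}. ?h c n)"
    unfolding Box_def using W by (rule sum.cong[OF refl])
  also have "\<dots> = (\<Sum>c\<in>II. \<Sum>n\<in>{n\<in>II. adj c n}. ?h c n)"
    by (rule sum.swap_restrict[OF I_fin[OF pm] I_fin[OF pm]])
  also have "\<dots> = Mob p P t"
    unfolding Mob_def
  proof (rule sum.cong[OF refl])
    fix c assume c: "c \<in> II"
    have "G p II c = (\<Sum>n\<in>{n\<in>{n\<in>II. c \<le> n}. adj c n}. eps p c n)"
      unfolding G_def F0_def using c I_fin[OF pm] by (simp add: sum.inter_filter[symmetric])
    also have "{n\<in>{n\<in>II. c \<le> n}. adj c n} = {n\<in>II. adj c n}" unfolding adj_def by auto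
    finally have "G p II c = (\<Sum>n\<in>{n\<in>II. adj c n}. eps p c n)" .
    then show "(\<Sum>n\<in>{n\<in>II. adj c n}. ?h c n) = real_of_int (muP p P c) * tmon p t c"
      using muP_eq[OF c] by (simp add: sum_distrib_right)
  qed
  finally show ?thesis .
qed

end

theorem theorem1p3:
  fixes p :: nat and P :: "(nat \<Rightarrow> int) set" and \<sigma> :: "nat \<Rightarrow> nat"
  assumes "polymatroid p P"
    and "bij_betw \<sigma> {..<p} {..<p}"
  shows "\<forall>t :: nat \<Rightarrow> real. (\<forall>i<p. t i \<noteq> 0) \<longrightarrow>
           Cave p P t = Stal p \<sigma> P t \<and> Stal p \<sigma> P t = Box p P t \<and> Box p P t = Mob p P t"
proof (intro allI impI)
  fix t :: "nat \<Rightarrow> real" assume t: "\<forall>i<p. t i \<noteq> 0"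
  have bid: "bij_betw id {..<p} {..<p}" by simp
  have c: "Cave p P t = (\<Sum>u\<in>P. Phi p P id t u)" by (rule Cave_Phi[OF assms(1) t])
  have b1: "Box p P t = (\<Sum>u\<in>P. Phi p P \<sigma> t u)" by (rule Box_Phi[OF assms(1) assms(2)])
  have b2: "Box p P t = (\<Sum>u\<in>P. Phi p P id t u)" by (rule Box_Phi[OF assms(1) bid])
  have s: "Stal p \<sigma> P t = (\<Sum>u\<in>P. Phi p P \<sigma> t u)" by (rule Stal_Phi[OF assms(1)])
  have m: "Box p P t = Mob p P t" by (rule Box_Mob[OF assms(1)])
  show "Cave p P t = Stal p \<sigma> P t \<and> Stal p \<sigma> P t = Box p P t \<and> Box p P t = Mob p P t"
    using c b1 b2 s m by simp
qed

end
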